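(* Let $A\in\mathbb{R}^{n\times n}$ be symmetric positive definite, $\Pi\in\mathbb{R}^{n\times n}$ symmetric positive definite, and $M_0\in\mathbb{R}^{n\times n}$. For $i\ge0$ let $R_i:=I_n-AM_i$, $Z_i:=\Pi R_i$, $G_i:=-\Pi AZ_i$, and for $i\ge1$ let $M_i$ be the matrix with $$M_i\in M_0+\mathcal{K}_i((\Pi A)^2,G_0)\quad\text{and}\quad R_i\perp\mathcal{K}_i((\Pi A)^2,G_0),$$ where $\mathcal{K}_i((\Pi A)^2,G_0)=\mathrm{span}\{G_0,(\Pi A)^2G_0,\dots,(\Pi A)^{2(i-1)}G_0\}$. Define $P_0:=-G_0$ and, for $i\ge1$, $P_i:=-G_i+\beta_iP_{i-1}$ with $\beta_i=\frac{(R_i,G_i)_F}{(R_{i-1},G_{i-1})_F}$. Then for $i=0,1,\dots$, $$M_{i+1}=M_i+\alpha_iP_i,\qquad \alpha_i=-\frac{(R_i,G_i)_F}{(P_i,AP_i)_F},\qquad R_{i+1}=R_i-\alpha_iAP_i.$$ Furthermore, $P_0,\dots,P_{i-1}$ form an $A$-orthogonal basis (i.e. $(P_j,AP_k)_F=0$ for $j\ne k$) of the Krylov subspace, and $$\mathrm{span}\{P_0,\dots,P_{i-1}\}=\mathrm{span}\{G_0,\dots,G_{i-1}\}=\mathcal{K}_i((\Pi A)^2,G_0).$$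
   Context: The Frobenius inner product is $(X,Y)_F=\operatorname{tr}(X^TY)$, and $\perp$ denotes orthogonality with respect to it. It is assumed that the iteration does not break down (the iterates are uniquely determined and $R_i\neq0$, $P_i\neq0$ for all indices considered). *)

theory Defs
  imports "HOL-Analysis.Analysis"
begin

definition frob :: "real^'n^'n \<Rightarrow> real^'n^'n \<Rightarrow> real" where
  "frob X Y = trace (transpose X ** Y)"

definition spd :: "real^'n^'n \<Rightarrow> bool" where
  "spd A \<longleftrightarrow> transpose A = A \<and> (\<forall>x. x \<noteq> 0 \<longrightarrow> x \<bullet> (A *v x) > 0)"

primrec mpow :: "real^'n^'n \<Rightarrow> nat \<Rightarrow> real^'n^'n" where
  "mpow B 0 = mat 1"
| "mpow B (Suc k) = B ** mpow B k"

definition krylov :: "real^'n^'n \<Rightarrow> real^'n^'n \<Rightarrow> nat \<Rightarrow> (real^'n^'n) set" where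
  "krylov B G i = span {mpow B k ** G | k. k < i}"

definition resid :: "real^'n^'n \<Rightarrow> (nat \<Rightarrow> real^'n^'n) \<Rightarrow> nat \<Rightarrow> real^'n^'n" where
  "resid A M i = mat 1 - A ** M i"

definition zdir :: "real^'n^'n \<Rightarrow> real^'n^'n \<Rightarrow> (nat \<Rightarrow> real^'n^'n) \<Rightarrow> nat \<Rightarrow> real^'n^'n" where
  "zdir A Pc M i = Pc ** resid A M i"

definition gdir :: "real^'n^'n \<Rightarrow> real^'n^'n \<Rightarrow> (nat \<Rightarrow> real^'n^'n) \<Rightarrow> nat \<Rightarrow> real^'n^'n" where
  "gdir A Pc M i = - (Pc ** A ** zdir A Pc M i)"

primrec pdir :: "real^'n^'n \<Rightarrow> real^'n^'n \<Rightarrow> (nat \<Rightarrow> real^'n^'n) \<Rightarrow> nat \<Rightarrow> real^'n^'n" where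
  "pdir A Pc M 0 = - gdir A Pc M 0"
| "pdir A Pc M (Suc i) = - gdir A Pc M (Suc i)
     + (frob (resid A M (Suc i)) (gdir A Pc M (Suc i)) / frob (resid A M i) (gdir A Pc M i))
       *\<^sub>R pdir A Pc M i"

end

theory Submission
  imports Defs
begin


lemma mm_sub: "(X::real^'n^'n) ** (Y - Z) = X ** Y - X ** Z"
  by (simp add: matrix_matrix_mult_def vec_eq_iff sum_subtractf right_diff_distrib)
lemma mm_neg: "(X::real^'n^'n) ** (- Y) = - (X ** Y)"
  by (simp add: matrix_matrix_mult_def vec_eq_iff sum_negf)
lemma mm_scale: "(X::real^'n^'n) ** (c *\<^sub>R Y) = c *\<^sub>R (X ** Y)"
  by (simp add: matrix_matrix_mult_def vec_eq_iff sum_distrib_left mult_ac)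
lemma mm_linear: "linear (\<lambda>Y::real^'n^'n. (X::real^'n^'n) ** Y)"
  by (rule linearI) (simp add: matrix_add_ldistrib, simp only: mm_scale)

lemma frob_inner: "frob X Y = X \<bullet> Y"
proof -
  have "frob X Y = (\<Sum>i\<in>UNIV. \<Sum>k\<in>UNIV. X$k$i * Y$k$i)"
    by (simp add: frob_def trace_def matrix_matrix_mult_def transpose_def)
  also have "\<dots> = (\<Sum>k\<in>UNIV. \<Sum>i\<in>UNIV. X$k$i * Y$k$i)" by (rule sum.swap)
  also have "\<dots> = X \<bullet> Y" by (simp add: inner_vec_def)
  finally show ?thesis .
qed

lemma inner_adj: "(X::real^'n^'n) \<bullet> ((A::real^'n^'n) ** (Y::real^'n^'n)) = (transpose A ** X) \<bullet> Y"
proof -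
  have "X \<bullet> (A ** Y) = trace (transpose X ** (A ** Y))" by (simp add: frob_inner[symmetric] frob_def)
  also have "\<dots> = trace (transpose (transpose A ** X) ** Y)"
    by (simp add: matrix_transpose_mul matrix_mul_assoc)
  also have "\<dots> = (transpose A ** X) \<bullet> Y" by (simp only: frob_def[symmetric] frob_inner)
  finally show ?thesis .
qed

lemma spd_pos:
  assumes "spd A" "(X::real^'n^'n) \<noteq> 0"
  shows "X \<bullet> (A ** X) > 0"
proof -
  define c where "c i = (\<chi> k. X$k$i)" for i
  have "X \<bullet> (A ** X) = (\<Sum>k\<in>UNIV. \<Sum>i\<in>UNIV. X$k$i * (\<Sum>l\<in>UNIV. A$k$l * X$l$i))"
    by (simp add: inner_vec_def matrix_matrix_mult_def)
  also have "\<dots> = (\<Sum>i\<in>UNIV. \<Sum>k\<in>UNIV. X$k$i * (\<Sum>l\<in>UNIV. A$k$l * X$l$i))" by (rule sum.swap)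
  also have "\<dots> = (\<Sum>i\<in>UNIV. c i \<bullet> (A *v c i))"
    by (simp add: inner_vec_def c_def matrix_vector_mult_def)
  finally have eq: "X \<bullet> (A ** X) = (\<Sum>i\<in>UNIV. c i \<bullet> (A *v c i))" .
  obtain i where "c i \<noteq> 0" using assms(2) by (auto simp: c_def vec_eq_iff)
  have nn: "0 \<le> c j \<bullet> (A *v c j)" for j
    using assms(1) unfolding spd_def by (cases "c j = 0") (auto intro: less_imp_le)
  have "0 < c i \<bullet> (A *v c i)" using assms(1) \<open>c i \<noteq> 0\<close> unfolding spd_def by auto
  then show ?thesis unfolding eq by (intro sum_pos2[of UNIV i]) (auto intro: nn)
qed

lemma gen_span:
  fixes f :: "nat \<Rightarrow> 'a::euclidean_space" and K :: "nat \<Rightarrow> 'a set"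
  assumes sub: "\<And>j. subspace (K j)" and mono: "\<And>j j'. j \<le> j' \<Longrightarrow> K j \<subseteq> K j'"
    and dimK: "\<And>j. dim (K j) \<le> j"
    and fin: "\<And>j. j < m \<Longrightarrow> f j \<in> K (Suc j)" and fnot: "\<And>j. j < m \<Longrightarrow> f j \<notin> K j"
    and jm: "j \<le> m"
  shows "span (f ` {..<j}) = K j \<and> independent (f ` {..<j}) \<and> inj_on f {..<j}"
proof -
  have subK: "span (f ` {..<j}) \<subseteq> K j" if "j \<le> m" for j
  proof (rule span_minimal[OF _ sub])
    show "f ` {..<j} \<subseteq> K j"
    proof
      fix x assume "x \<in> f ` {..<j}"
      then obtain k where k: "k < j" "x = f k" by auto
      then have "f k \<in> K (Suc k)" using fin that by auto
      moreover have "K (Suc k) \<subseteq> K j" using mono k by auto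
      ultimately show "x \<in> K j" using k by auto
    qed
  qed
  have ind: "independent (f ` {..<j}) \<and> inj_on f {..<j}" if "j \<le> m" for j
    using that
  proof (induction j)
    case 0 then show ?case by (simp add: independent_empty)
  next
    case (Suc j)
    then have IH: "independent (f ` {..<j})" "inj_on f {..<j}" by auto
    have nin: "f j \<notin> span (f ` {..<j})" using subK[of j] fnot[of j] Suc.prems by auto
    have eq: "f ` {..<Suc j} = insert (f j) (f ` {..<j})" by (simp add: lessThan_Suc)
    have "independent (f ` {..<Suc j})" unfolding eq using independent_insertI[OF nin IH(1)] .
    moreover have "inj_on f {..<Suc j}" unfolding lessThan_Suc
      using IH(2) nin span_base[of "f j" "f ` {..<j}"] by auto
    ultimately show ?case by simp
  qed
  from ind[OF jm] have i1: "independent (f ` {..<j})" and i2: "inj_on f {..<j}" by auto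
  have "dim (span (f ` {..<j})) = j"
    using dim_eq_card_independent[OF i1] card_image[OF i2] by simp
  then have "span (f ` {..<j}) = K j"
    using subspace_dim_equal[OF subspace_span sub subK[OF jm]] dimK[of j] by simp
  with i1 i2 show ?thesis by simp
qed




locale pcg =
  fixes A Pc :: "real^'n^'n" and M :: "nat \<Rightarrow> real^'n^'n"
  assumes spdA: "spd A" and spdP: "spd Pc"
    and iter: "\<And>j. j \<ge> 1 \<Longrightarrow>
        M j \<in> {M 0 + X | X. X \<in> krylov ((Pc ** A) ** (Pc ** A)) (gdir A Pc M 0) j}
      \<and> (\<forall>X \<in> krylov ((Pc ** A) ** (Pc ** A)) (gdir A Pc M 0) j. frob (resid A M j) X = 0)"
begin

abbreviation "B2 \<equiv> (Pc ** A) ** (Pc ** A)"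
abbreviation "K j \<equiv> krylov B2 (gdir A Pc M 0) j"
abbreviation "R j \<equiv> resid A M j"
abbreviation "G j \<equiv> gdir A Pc M j"
abbreviation "P j \<equiv> pdir A Pc M j"

lemma symA: "transpose A = A" using spdA by (simp add: spd_def)
lemma symP: "transpose Pc = Pc" using spdP by (simp add: spd_def)

lemma Asym: "(X::real^'n^'n) \<bullet> (A ** Y) = Y \<bullet> (A ** X)"
proof -
  have "X \<bullet> (A ** Y) = (A ** X) \<bullet> Y" using inner_adj[of X A Y] symA by simp
  then show ?thesis by (simp add: inner_commute)
qed

lemma K_sub: "subspace (K j)" unfolding krylov_def by (rule subspace_span)
lemma K_mono: "j \<le> j' \<Longrightarrow> K j \<subseteq> K j'" unfolding krylov_def by (rule span_mono) auto
lemma K_gen: "k < j \<Longrightarrow> mpow B2 k ** G 0 \<in> K j" unfolding krylov_def by (rule span_base) auto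

lemma K_dim: "dim (K j) \<le> j"
proof -
  have eq: "{mpow B2 k ** G 0 | k. k < j} = (\<lambda>k. mpow B2 k ** G 0) ` {..<j}" by auto
  have "dim (K j) \<le> card ((\<lambda>k. mpow B2 k ** G 0) ` {..<j})"
    unfolding krylov_def eq by (rule dim_le_card) auto
  also have "\<dots> \<le> j" using card_image_le[of "{..<j}"] by simp
  finally show ?thesis .
qed

lemma B2K: assumes "X \<in> K j" shows "B2 ** X \<in> K (Suc j)"
proof -
  let ?S = "{mpow B2 k ** G 0 | k. k < j}"
  have "B2 ** X \<in> (\<lambda>Y. B2 ** Y) ` span ?S" using assms unfolding krylov_def by auto
  also have "\<dots> = span ((\<lambda>Y. B2 ** Y) ` ?S)" by (rule linear_span_image[OF mm_linear, symmetric])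
  also have "\<dots> \<subseteq> K (Suc j)" unfolding krylov_def
  proof (rule span_mono, clarify)
    fix k assume "k < j"
    then show "\<exists>k'. B2 ** (mpow B2 k ** G 0) = mpow B2 k' ** G 0 \<and> k' < Suc j"
      by (intro exI[of _ "Suc k"]) (simp add: matrix_mul_assoc)
  qed
  finally show ?thesis .
qed

lemma D_in: "M j - M 0 \<in> K j"
proof (cases "j = 0")
  case True then show ?thesis by (simp add: span_zero krylov_def)
next
  case False then have "j \<ge> 1" by simp
  from iter[OF this] show ?thesis by auto
qed

lemma R_orth: assumes "X \<in> K j" shows "R j \<bullet> X = 0"
proof (cases "j = 0")
  case True then show ?thesis using assms by (simp add: krylov_def)
next
  case False then have "j \<ge> 1" by simp
  from iter[OF this] assms show ?thesis by (auto simp: frob_inner)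
qed

lemma R_expr: "R j = R 0 - A ** (M j - M 0)"
  by (simp add: resid_def mm_sub)

lemma G_alt: "G j = - ((Pc ** A ** Pc) ** R j)"
  by (simp add: gdir_def zdir_def matrix_mul_assoc)

lemma G_expr: "G j = G 0 + B2 ** (M j - M 0)"
  unfolding G_alt R_expr[of j] by (simp add: mm_sub matrix_mul_assoc)

lemma G_in: "G j \<in> K (Suc j)"
proof -
  have "G 0 \<in> K (Suc j)" using K_gen[of 0 "Suc j"] by simp
  moreover have "B2 ** (M j - M 0) \<in> K (Suc j)" by (rule B2K[OF D_in])
  ultimately show ?thesis unfolding G_expr[of j] using K_sub[of "Suc j"] by (simp add: subspace_add)
qed

lemma C_sym: "transpose (Pc ** A ** Pc) = Pc ** A ** Pc"
  by (simp add: matrix_transpose_mul symA symP matrix_mul_assoc)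

lemma G_inner: "G m \<bullet> Y = - (R m \<bullet> ((Pc ** A ** Pc) ** Y))"
proof -
  let ?C = "Pc ** A ** Pc"
  have "(?C ** R m) \<bullet> Y = Y \<bullet> (?C ** R m)" by (rule inner_commute)
  also have "\<dots> = (?C ** Y) \<bullet> R m" using inner_adj[of Y ?C "R m"] C_sym by simp
  also have "\<dots> = R m \<bullet> (?C ** Y)" by (rule inner_commute)
  finally show ?thesis unfolding G_alt[of m] by simp
qed

lemma RG_swap: "R k \<bullet> G j = R j \<bullet> G k"
proof -
  let ?C = "Pc ** A ** Pc"
  have 1: "R k \<bullet> G j = - (R j \<bullet> (?C ** R k))" using G_inner[of j "R k"] by (metis inner_commute)
  have 2: "R j \<bullet> G k = - (R k \<bullet> (?C ** R j))" using G_inner[of k "R j"] by (metis inner_commute)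
  have "R k \<bullet> (?C ** R j) = (?C ** R k) \<bullet> R j" using inner_adj[of "R k" ?C "R j"] C_sym by simp
  then have 3: "R k \<bullet> (?C ** R j) = R j \<bullet> (?C ** R k)" by (metis inner_commute)
  show ?thesis using 1 2 3 by simp
qed

lemma RG_neg: assumes "R j \<noteq> 0" shows "R j \<bullet> G j < 0"
proof -
  have "0 < R j \<bullet> (Pc ** R j)" by (rule spd_pos[OF spdP assms])
  then have nz: "Pc ** R j \<noteq> 0" by auto
  have "R j \<bullet> G j = - ((Pc ** R j) \<bullet> (A ** (Pc ** R j)))"
    unfolding G_alt by (simp add: inner_adj symP matrix_mul_assoc[symmetric])
  also have "\<dots> < 0" using spd_pos[OF spdA nz] by simp
  finally show ?thesis .
qed

end


context pcg begin

lemma G_notin: assumes "R j \<noteq> 0" shows "G j \<notin> K j"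
  using R_orth[of "G j" j] RG_neg[OF assms] by auto

lemma G_span:
  assumes nb: "\<And>k. k \<le> i \<Longrightarrow> R k \<noteq> 0" and ji: "j \<le> Suc i"
  shows "span (G ` {..<j}) = K j"
  using gen_span[of K "Suc i" G j, OF K_sub K_mono K_dim G_in G_notin ji] nb by auto

lemma PG_in: "P j + G j \<in> K j"
proof (induction j)
  case 0 then show ?case by (simp add: krylov_def span_zero)
next
  case (Suc j)
  have "P j = (P j + G j) - G j" by simp
  moreover have "P j + G j \<in> K (Suc j)" using Suc K_mono[of j "Suc j"] by auto
  ultimately have "P j \<in> K (Suc j)" using G_in[of j] K_sub[of "Suc j"] by (metis subspace_diff)
  then show ?case using K_sub[of "Suc j"] by (simp add: subspace_scale)
qed

lemma P_in: "P j \<in> K (Suc j)"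
proof -
  have "P j = (P j + G j) - G j" by simp
  moreover have "P j + G j \<in> K (Suc j)" using PG_in[of j] K_mono[of j "Suc j"] by auto
  ultimately show ?thesis using G_in[of j] K_sub[of "Suc j"] by (metis subspace_diff)
qed

lemma decomp:
  assumes nb: "\<And>k. k \<le> i \<Longrightarrow> R k \<noteq> 0" and ji: "j \<le> i" and X: "X \<in> K (Suc j)"
  shows "\<exists>c k. k \<in> K j \<and> X = c *\<^sub>R P j + k"
proof -
  have "K (Suc j) = span (insert (G j) (G ` {..<j}))"
    using G_span[of i "Suc j", OF nb] ji by (simp add: lessThan_Suc)
  with X obtain c where c: "X - c *\<^sub>R G j \<in> K j"
    using G_span[of i j, OF nb] ji by (auto simp: span_insert)
  let ?k = "X - c *\<^sub>R G j + c *\<^sub>R (P j + G j)"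
  have "?k \<in> K j" using c PG_in[of j] K_sub[of j] by (simp add: subspace_add subspace_scale)
  moreover have "X = (- c) *\<^sub>R P j + ?k" by (simp add: algebra_simps)
  ultimately show ?thesis by blast
qed

end


context pcg begin

abbreviation "alpha j \<equiv> - (R j \<bullet> G j) / (P j \<bullet> (A ** P j))"

lemma AE: "A ** (M (Suc j) - M j) = R j - R (Suc j)"
  by (simp add: resid_def mm_sub)

lemma P_Suc: "P (Suc j) = - G (Suc j) + ((R (Suc j) \<bullet> G (Suc j)) / (R j \<bullet> G j)) *\<^sub>R P j"
  by (simp add: frob_inner)

lemma RP: "R j \<bullet> P j = - (R j \<bullet> G j)"
proof -
  have "R j \<bullet> (P j + G j) = 0" by (rule R_orth[OF PG_in])
  then show ?thesis by (simp add: inner_add_right)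
qed

lemma step_U:
  assumes nb: "\<And>k. k \<le> i \<Longrightarrow> R k \<noteq> 0 \<and> P k \<noteq> 0" and ji: "j \<le> i"
    and Q: "\<forall>X\<in>K j. X \<bullet> (A ** P j) = 0"
  shows "M (Suc j) = M j + alpha j *\<^sub>R P j"
proof -
  let ?E = "M (Suc j) - M j"
  have "?E = (M (Suc j) - M 0) - (M j - M 0)" by simp
  moreover have "M j - M 0 \<in> K (Suc j)" using D_in[of j] K_mono[of j "Suc j"] by auto
  ultimately have E: "?E \<in> K (Suc j)" using D_in[of "Suc j"] K_sub[of "Suc j"] by (metis subspace_diff)
  obtain c k where k: "k \<in> K j" and Ek: "?E = c *\<^sub>R P j + k"
    using decomp[of i j ?E] nb ji E by blast
  have "k \<bullet> (A ** ?E) = k \<bullet> R j - k \<bullet> R (Suc j)" by (simp add: AE inner_diff_right)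
  also have "\<dots> = 0" using R_orth[OF k] R_orth[of k "Suc j"] k K_mono[of j "Suc j"]
    by (auto simp: inner_commute)
  finally have "k \<bullet> (A ** ?E) = 0" .
  moreover have "k \<bullet> (A ** ?E) = c * (k \<bullet> (A ** P j)) + k \<bullet> (A ** k)"
    unfolding Ek by (simp add: matrix_add_ldistrib mm_scale inner_add_right)
  ultimately have "k \<bullet> (A ** k) = 0" using Q k by simp
  then have "k = 0" using spd_pos[OF spdA, of k] by (cases "k = 0") auto
  with Ek have Ec: "?E = c *\<^sub>R P j" by simp
  have "R (Suc j) = R j - c *\<^sub>R (A ** P j)" using AE[of j] unfolding Ec mm_scale by simp
  moreover have "R (Suc j) \<bullet> P j = 0" by (rule R_orth[OF P_in])
  ultimately have "(R j - c *\<^sub>R (A ** P j)) \<bullet> P j = 0" by simp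
  then have "R j \<bullet> P j = c * ((A ** P j) \<bullet> P j)" by (simp add: inner_diff_left)
  then have "R j \<bullet> P j = c * (P j \<bullet> (A ** P j))" by (simp add: inner_commute[of "A ** P j"])
  then have "c * (P j \<bullet> (A ** P j)) = - (R j \<bullet> G j)" using RP by simp
  moreover have "P j \<bullet> (A ** P j) > 0" using spd_pos[OF spdA] nb ji by auto
  ultimately have "c = alpha j" by (simp add: field_simps)
  with Ec show ?thesis by (simp add: algebra_simps)
qed

end


context pcg begin

lemma step_Q:
  assumes nb: "\<And>k. k \<le> i \<Longrightarrow> R k \<noteq> 0 \<and> P k \<noteq> 0" and ji: "Suc j \<le> i"
    and Q: "\<forall>X\<in>K j. X \<bullet> (A ** P j) = 0"
    and U: "M (Suc j) = M j + alpha j *\<^sub>R P j"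
  shows "\<forall>X\<in>K (Suc j). X \<bullet> (A ** P (Suc j)) = 0"
proof
  fix X assume X: "X \<in> K (Suc j)"
  define g0 where "g0 = R j \<bullet> G j"
  define g1 where "g1 = R (Suc j) \<bullet> G (Suc j)"
  define \<beta> where "\<beta> = g1 / g0"
  have g0: "g0 \<noteq> 0" using RG_neg[of j] nb[of j] ji unfolding g0_def by auto
  have pAp: "P j \<bullet> (A ** P j) > 0" using spd_pos[OF spdA] nb[of j] ji by auto
  have al: "alpha j \<noteq> 0" using g0 pAp unfolding g0_def by simp
  have PS: "P (Suc j) = - G (Suc j) + \<beta> *\<^sub>R P j" unfolding \<beta>_def g0_def g1_def by (rule P_Suc)
  obtain c k where k: "k \<in> K j" and Xk: "X = c *\<^sub>R P j + k"
    using decomp[of i j X] nb ji X by fastforce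
  have kS: "k \<in> K (Suc j)" using k K_mono[of j "Suc j"] by auto
  have "k \<bullet> (A ** G (Suc j)) = G (Suc j) \<bullet> (A ** k)" by (rule Asym)
  also have "\<dots> = - (R (Suc j) \<bullet> (B2 ** k))" by (simp add: G_inner matrix_mul_assoc)
  also have "\<dots> = 0" using R_orth[OF B2K[OF k]] by simp
  finally have kG: "k \<bullet> (A ** G (Suc j)) = 0" .
  have kP: "k \<bullet> (A ** P (Suc j)) = 0"
    unfolding PS using kG Q k by (simp add: matrix_add_ldistrib mm_sub mm_neg mm_scale inner_add_right inner_diff_right)
  have AaP: "A ** (alpha j *\<^sub>R P j) = R j - R (Suc j)" using AE[of j] U by simp
  have "alpha j * (P j \<bullet> (A ** P (Suc j))) = (alpha j *\<^sub>R P j) \<bullet> (A ** P (Suc j))" by simp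
  also have "\<dots> = P (Suc j) \<bullet> (A ** (alpha j *\<^sub>R P j))" by (rule Asym)
  also have "\<dots> = P (Suc j) \<bullet> R j - P (Suc j) \<bullet> R (Suc j)" by (subst AaP) (rule inner_diff_right)
  also have "\<dots> = 0"
  proof -
    have a: "G (Suc j) \<bullet> R j = 0"
      using RG_swap[of j "Suc j"] R_orth[OF G_in[of j]] by (simp add: inner_commute)
    have b: "P j \<bullet> R j = - g0" using RP[of j] unfolding g0_def by (simp add: inner_commute)
    have c: "G (Suc j) \<bullet> R (Suc j) = g1" unfolding g1_def by (simp add: inner_commute)
    have d: "P j \<bullet> R (Suc j) = 0" using R_orth[OF P_in[of j]] by (simp add: inner_commute)
    have "P (Suc j) \<bullet> R j - P (Suc j) \<bullet> R (Suc j) = - \<beta> * g0 + g1"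
      unfolding PS using a b c d by (simp add: inner_add_left inner_diff_left)
    also have "\<dots> = 0" using g0 unfolding \<beta>_def by simp
    finally show ?thesis .
  qed
  finally have "P j \<bullet> (A ** P (Suc j)) = 0" using al by simp
  then show "X \<bullet> (A ** P (Suc j)) = 0"
    unfolding Xk using kP by (simp add: inner_add_left)
qed

lemma mainQU:
  assumes nb: "\<And>k. k \<le> i \<Longrightarrow> R k \<noteq> 0 \<and> P k \<noteq> 0"
  shows "j \<le> i \<Longrightarrow> (\<forall>X\<in>K j. X \<bullet> (A ** P j) = 0) \<and> M (Suc j) = M j + alpha j *\<^sub>R P j"
proof (induction j)
  case 0
  have "\<forall>X\<in>K 0. X \<bullet> (A ** P 0) = 0" by (simp add: krylov_def)
  with step_U[OF nb] show ?case by auto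
next
  case (Suc j)
  then have "(\<forall>X\<in>K j. X \<bullet> (A ** P j) = 0) \<and> M (Suc j) = M j + alpha j *\<^sub>R P j" by auto
  then have "\<forall>X\<in>K (Suc j). X \<bullet> (A ** P (Suc j)) = 0" using step_Q[OF nb Suc.prems] by auto
  with step_U[OF nb Suc.prems] show ?case by auto
qed

end

theorem proposition10:
  fixes A Pc :: "real^'n^'n" and M :: "nat \<Rightarrow> real^'n^'n" and i :: nat
  assumes "spd A" and "spd Pc"
    and iter: "\<And>j. j \<ge> 1 \<Longrightarrow>
        M j \<in> {M 0 + X | X. X \<in> krylov ((Pc ** A) ** (Pc ** A)) (gdir A Pc M 0) j}
      \<and> (\<forall>X \<in> krylov ((Pc ** A) ** (Pc ** A)) (gdir A Pc M 0) j. frob (resid A M j) X = 0)"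
    and nobreak: "\<And>j. j \<le> i \<Longrightarrow> resid A M j \<noteq> 0 \<and> pdir A Pc M j \<noteq> 0"
  shows "(let \<alpha> = - frob (resid A M i) (gdir A Pc M i) / frob (pdir A Pc M i) (A ** pdir A Pc M i)
          in M (Suc i) = M i + \<alpha> *\<^sub>R pdir A Pc M i
           \<and> resid A M (Suc i) = resid A M i - \<alpha> *\<^sub>R (A ** pdir A Pc M i))
    \<and> (\<forall>j<i. \<forall>k<i. j \<noteq> k \<longrightarrow> frob (pdir A Pc M j) (A ** pdir A Pc M k) = 0)
    \<and> inj_on (pdir A Pc M) {..<i} \<and> independent (pdir A Pc M ` {..<i})
    \<and> span (pdir A Pc M ` {..<i}) = span (gdir A Pc M ` {..<i})
    \<and> span (gdir A Pc M ` {..<i}) = krylov ((Pc ** A) ** (Pc ** A)) (gdir A Pc M 0) i"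
proof -
  have pc: "pcg A Pc M" unfolding pcg_def using assms(1,2) iter by blast
  interpret pcg A Pc M by (rule pc)
  note QU = mainQU[of i, OF nobreak]
  have Q: "\<And>j X. j \<le> i \<Longrightarrow> X \<in> K j \<Longrightarrow> X \<bullet> (A ** P j) = 0" using QU by blast
  have U: "M (Suc i) = M i + alpha i *\<^sub>R P i" using QU[of i] by simp
  have Ad: "A ** (M i + alpha i *\<^sub>R P i) = A ** M i + alpha i *\<^sub>R (A ** P i)"
    by (simp only: matrix_add_ldistrib mm_scale)
  have RU: "R (Suc i) = R i - alpha i *\<^sub>R (A ** P i)"
  proof -
    have "R (Suc i) = mat 1 - A ** (M i + alpha i *\<^sub>R P i)" by (simp only: resid_def U)
    also have "\<dots> = mat 1 - (A ** M i + alpha i *\<^sub>R (A ** P i))" by (simp only: Ad)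
    also have "\<dots> = (mat 1 - A ** M i) - alpha i *\<^sub>R (A ** P i)" by (rule diff_diff_eq[symmetric])
    also have "\<dots> = R i - alpha i *\<^sub>R (A ** P i)" by (simp only: resid_def)
    finally show ?thesis .
  qed
  have orth: "\<forall>j<i. \<forall>k<i. j \<noteq> k \<longrightarrow> P j \<bullet> (A ** P k) = 0"
  proof (intro allI impI)
    fix j k assume jk: "j < i" "k < i" "j \<noteq> k"
    show "P j \<bullet> (A ** P k) = 0"
    proof (cases "j < k")
      case True
      then have "P j \<in> K k" using P_in[of j] K_mono[of "Suc j" k] by auto
      then show ?thesis using Q[of k] jk by simp
    next
      case False
      then have "k < j" using jk by simp
      then have "P k \<in> K j" using P_in[of k] K_mono[of "Suc k" j] by auto
      then have "P k \<bullet> (A ** P j) = 0" using Q[of j] jk by simp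
      then show ?thesis by (simp add: Asym)
    qed
  qed
  have Pnot: "P j \<notin> K j" if "j < i" for j
  proof
    assume "P j \<in> K j"
    then have "P j \<bullet> (A ** P j) = 0" using Q[of j] that by simp
    moreover have "P j \<bullet> (A ** P j) > 0" using spd_pos[OF spdA] nobreak[of j] that by auto
    ultimately show False by simp
  qed
  have PS: "span (P ` {..<i}) = K i \<and> independent (P ` {..<i}) \<and> inj_on P {..<i}"
    by (rule gen_span[of K i P i, OF K_sub K_mono K_dim P_in Pnot]) auto
  have GS: "span (G ` {..<i}) = K i" using G_span[of i i] nobreak by auto
  show ?thesis unfolding Let_def frob_inner using U RU orth PS GS by simp
qed

end
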